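(* Let $a,c\in\mathbb{Z}$, $k,m,n\in\mathbb{N}$ with $km>n\ge1$, $t=\gcd(n,k)$, $n=n_1t$, $k=k_1t$, and $u_1,u_2\in\mathbb{Z}$ with $ku_1+nu_2=t$. Let $p$ be a prime with $p\nmid ackm(km-n)$ and $p\mid(\mathcal{C}-\mathcal{E})$. Let $\alpha_1,\alpha_2\in\mathbb{Z}$ satisfy $(km-n)\alpha_1\equiv nc\pmod{p^2}$ and $a(km-n)^m\alpha_2\equiv(kmc)^m\pmod{p^2}$, and let $\alpha\in\mathbb{Z}$ with $\alpha\equiv\alpha_1^{u_1}\alpha_2^{u_2}\pmod{p^2}$. Then $(\alpha^{k_1}+c)^m-a\alpha^{n_1}\equiv0\pmod{p^2}$ if and only if $\alpha_1^{n_1}\equiv\alpha_2^{k_1}\pmod{p^2}$.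
   Context: $\mathcal{C}=(km)^{k_1m}c^{k_1m-n_1}$, $\mathcal{E}=a^{k_1}n^{n_1}(km-n)^{k_1m-n_1}$. Since $\alpha_1,\alpha_2$ are units modulo $p^2$, negative powers are taken in $(\mathbb{Z}/p^2\mathbb{Z})^\times$. *)

theory Defs
  imports "HOL-Number_Theory.Number_Theory"
begin

text \<open>Integer power modulo m: negative exponents use the modular inverse
  (meaningful when x is a unit modulo m, i.e. a power in (Z/mZ)^*).\<close>
definition zpow_mod :: "int \<Rightarrow> int \<Rightarrow> int \<Rightarrow> int" where
  "zpow_mod m x e = (if e \<ge> 0 then x ^ nat e else modular_inverse m x ^ nat (- e))"

end

theory Submission imports Defs begin

lemma binom_p2:
  fixes X P Y :: int
  shows "\<exists>Z. (X + P*Y)^(Suc m) = X^(Suc m) + int (Suc m) * X^m * P * Y + P^2 * Z"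
proof (induction m)
  case 0 show ?case by (rule exI[of _ 0]) simp
next
  case (Suc m)
  then obtain Z where Z: "(X + P*Y)^(Suc m) = X^(Suc m) + int (Suc m) * X^m * P * Y + P^2 * Z" by blast
  have "(X + P*Y)^(Suc (Suc m)) = (X + P*Y) * (X^(Suc m) + int (Suc m) * X^m * P * Y + P^2 * Z)"
    by (subst power_Suc) (simp only: Z)
  also have "\<dots> = X^(Suc (Suc m)) + int (Suc (Suc m)) * X^(Suc m) * P * Y
      + P^2 * (Z * X + int (Suc m) * X^m * Y^2 + P * Z * Y)"
    by (simp add: algebra_simps power2_eq_square)
  finally show ?case by blast
qed

lemma binom_cong:
  fixes X P Y :: int
  assumes "m \<ge> 1"
  shows "[(X + P*Y)^m = X^m + int m * X^(m-1) * P * Y] (mod P^2)"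
proof -
  obtain m' where m: "m = Suc m'" using assms by (cases m) auto
  obtain Z where "(X + P*Y)^(Suc m') = X^(Suc m') + int (Suc m') * X^m' * P * Y + P^2 * Z"
    using binom_p2 by blast
  thus ?thesis unfolding m cong_iff_dvd_diff by simp
qed

lemma one_pow_cong:
  fixes P d :: int
  shows "[(1 + P*d)^b = 1 + int b * P * d] (mod P^2)"
proof (cases "b = 0")
  case True thus ?thesis by simp
next
  case False
  thus ?thesis using binom_cong[of b 1 P d] by simp
qed

lemma pw1:
  fixes x y :: int
  assumes "k*a = 1 + n*b"
  shows "(x^a * y^b)^k = x * (x^n * y^k)^b"
proof -
  have "(x^a * y^b)^k = x^(k*a) * y^(k*b)" by (simp add: power_mult_distrib power_mult[symmetric] mult.commute)
  also have "\<dots> = x * (x^(n*b) * y^(k*b))" unfolding assms by (simp add: power_add)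
  also have "\<dots> = x * (x^n * y^k)^b" by (simp only: power_mult power_mult_distrib)
  finally show ?thesis .
qed
lemma pw2:
  fixes x y z :: int
  assumes "k*a = 1 + n*b"
  shows "(z*y) * (x^a*y^b)^n = z * (x^n*y^k)^a"
proof -
  have "(z*y) * (x^a*y^b)^n = z * (x^(n*a) * y^(1 + n*b))" by (simp add: power_mult_distrib power_mult[symmetric] mult.commute mult.left_commute)
  also have "\<dots> = z * (x^(n*a) * y^(k*a))" unfolding assms ..
  also have "\<dots> = z * (x^n*y^k)^a" by (simp only: power_mult power_mult_distrib)
  finally show ?thesis .
qed

theorem mainTheorem14:
  fixes a c u1 u2 \<alpha>1 \<alpha>2 \<alpha> :: int
    and k m n t n1 k1 p :: nat
  assumes "k * m > n" and "n \<ge> 1"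
    and "t = gcd n k" and "n = n1 * t" and "k = k1 * t"
    and "int k * u1 + int n * u2 = int t"
    and "prime p"
    and "\<not> int p dvd a * c * int k * int m * (int (k * m) - int n)"
    and "int p dvd ((int (k * m)) ^ (k1 * m) * c ^ (k1 * m - n1)
                   - a ^ k1 * (int n) ^ n1 * (int (k * m) - int n) ^ (k1 * m - n1))"
    and "[(int (k * m) - int n) * \<alpha>1 = int n * c] (mod (int p ^ 2))"
    and "[a * (int (k * m) - int n) ^ m * \<alpha>2 = (int (k * m) * c) ^ m] (mod (int p ^ 2))"
    and "[\<alpha> = zpow_mod (int p ^ 2) \<alpha>1 u1 * zpow_mod (int p ^ 2) \<alpha>2 u2] (mod (int p ^ 2))"
  shows "[(\<alpha> ^ k1 + c) ^ m - a * \<alpha> ^ n1 = 0] (mod (int p ^ 2))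
         \<longleftrightarrow> [\<alpha>1 ^ n1 = \<alpha>2 ^ k1] (mod (int p ^ 2))"
proof -
  define P where "P = int p"
  define q where "q = P^2"
  define N where "N = int (k * m) - int n"
  note A = assms[folded P_def N_def, folded q_def]
  have pP: "prime P" using assms(7) unfolding P_def by simp
  have tpos: "t > 0" using assms(2,3) by simp
  have m1: "m \<ge> 1" using assms(1) by (cases "m = 0") auto
  have kpos: "k \<ge> 1" using assms(1) by (cases "k = 0") auto
  have k1pos: "k1 \<ge> 1" using kpos assms(5) by (cases k1) auto
  have n1pos: "n1 \<ge> 1" using assms(2,4) by (cases n1) auto
  have bez: "int k1 * u1 + int n1 * u2 = 1"
  proof -
    have "int t * (int k1 * u1 + int n1 * u2) = int t * 1"
      using assms(6) unfolding assms(4,5) by (simp add: algebra_simps)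
    thus ?thesis using tpos by simp
  qed
  have nd: "\<not> P dvd a" "\<not> P dvd c" "\<not> P dvd int k" "\<not> P dvd int m" "\<not> P dvd N"
    using A(8) pP by (auto simp: prime_dvd_mult_iff)
  have ndt: "\<not> P dvd int t"
    using nd(3) assms(5) by (metis dvd_mult_left of_nat_mult dvd_trans dvd_triv_right)
  have ndn: "\<not> P dvd int n"
  proof
    assume "P dvd int n"
    hence "P dvd (int n) ^ n1" using n1pos pP by (simp add: prime_dvd_power_iff)
    hence "P dvd a ^ k1 * (int n) ^ n1 * N ^ (k1 * m - n1)"
      by (simp add: dvd_mult dvd_mult2)
    hence "P dvd (int (k * m)) ^ (k1 * m) * c ^ (k1 * m - n1)" using A(9)
      by (metis dvd_diff_commute dvd_add_right_iff diff_add_cancel)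
    hence "P dvd int (k * m) ^ (k1 * m) \<or> P dvd c ^ (k1 * m - n1)" using pP by (simp add: prime_dvd_mult_iff)
    moreover have "\<not> P dvd int (k * m) ^ (k1 * m)"
      using pP nd k1pos m1 by (simp add: prime_dvd_power_iff prime_dvd_mult_iff)
    moreover have "\<not> P dvd c ^ (k1 * m - n1)"
      using pP nd by (cases "k1 * m - n1 = 0") (auto simp: prime_dvd_power_iff)
    ultimately show False by blast
  qed

  have Pq: "P dvd q" unfolding q_def by (simp add: power2_eq_square)
  have c10: "[N*\<alpha>1 = int n * c] (mod q)" using A(10) unfolding q_def .
  have c11: "[a * N^m * \<alpha>2 = (int (k*m) * c)^m] (mod q)" using A(11) unfolding q_def .
  have c10P: "[N*\<alpha>1 = int n * c] (mod P)" using cong_dvd_modulus[OF c10 Pq] .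
  have c11P: "[a * N^m * \<alpha>2 = (int (k*m) * c)^m] (mod P)" using cong_dvd_modulus[OF c11 Pq] .
  have ndkmc: "\<not> P dvd int (k*m) * c" using nd pP by (simp add: prime_dvd_mult_iff)
  have nd1: "\<not> P dvd \<alpha>1"
  proof
    assume "P dvd \<alpha>1"
    hence "P dvd N * \<alpha>1" by simp
    hence "P dvd int n * c" using c10P by (simp add: cong_dvd_iff)
    thus False using pP ndn nd by (simp add: prime_dvd_mult_iff)
  qed
  have nd2: "\<not> P dvd \<alpha>2"
  proof
    assume "P dvd \<alpha>2"
    hence "P dvd a * N^m * \<alpha>2" by simp
    hence "P dvd (int (k*m) * c)^m" using c11P by (simp add: cong_dvd_iff)
    thus False using pP ndkmc m1 by (simp add: prime_dvd_power_iff)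
  qed
  have cop: "coprime x q" if "\<not> P dvd x" for x
  proof -
    have "coprime P x" using prime_imp_coprime[OF pP that] .
    thus ?thesis unfolding q_def by (simp add: coprime_commute)
  qed
  define i1 where "i1 = modular_inverse q \<alpha>1"
  define i2 where "i2 = modular_inverse q \<alpha>2"
  have inv1: "[\<alpha>1 * i1 = 1] (mod q)" unfolding i1_def by (rule cong_modular_inverse1[OF cop[OF nd1]])
  have inv2: "[\<alpha>2 * i2 = 1] (mod q)" unfolding i2_def by (rule cong_modular_inverse1[OF cop[OF nd2]])
  have modp: "[\<alpha>1^n1 = \<alpha>2^k1] (mod P)"
  proof -
    have le: "n1 \<le> k1 * m" using assms(1,4,5) tpos
      by (metis less_imp_le_nat mult.assoc mult.commute mult_le_cancel2)
    have "a^k1 * N^(k1*m) * \<alpha>1^n1 = a^k1 * N^(k1*m-n1) * (N*\<alpha>1)^n1"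
      using le by (simp add: power_mult_distrib algebra_simps flip: power_add)
    also have "[\<dots> = a^k1 * N^(k1*m-n1) * (int n * c)^n1] (mod P)"
      by (intro cong_mult cong_refl cong_pow c10P)
    also have "a^k1 * N^(k1*m-n1) * (int n * c)^n1 = c^n1 * (a ^ k1 * (int n) ^ n1 * N ^ (k1 * m - n1))"
      by (simp add: power_mult_distrib algebra_simps)
    also have "[\<dots> = c^n1 * ((int (k * m)) ^ (k1 * m) * c ^ (k1 * m - n1))] (mod P)"
      using A(9) unfolding N_def by (intro cong_mult[OF cong_refl]) (simp add: cong_iff_dvd_diff dvd_diff_commute)
    also have "c^n1 * ((int (k * m)) ^ (k1 * m) * c ^ (k1 * m - n1)) = (int (k*m) * c)^(m*k1)"
      using le by (simp add: power_mult_distrib algebra_simps flip: power_add)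
    also have "[\<dots> = (a * N^m * \<alpha>2)^k1] (mod P)"
      unfolding power_mult by (intro cong_pow cong_sym[OF c11P])
    also have "(a * N^m * \<alpha>2)^k1 = a^k1 * N^(k1*m) * \<alpha>2^k1"
      by (simp add: power_mult_distrib algebra_simps flip: power_mult)
    finally have "[a^k1 * N^(k1*m) * \<alpha>1^n1 = a^k1 * N^(k1*m) * \<alpha>2^k1] (mod P)" .
    moreover have "coprime (a^k1 * N^(k1*m)) P"
      using prime_imp_coprime[OF pP nd(1)] prime_imp_coprime[OF pP nd(5)] by (simp add: coprime_commute)
    ultimately show ?thesis by (simp add: cong_mult_lcancel mult.assoc)
  qed

  define \<delta> where "\<delta> = \<alpha>1^n1 * i2^k1"
  define \<gamma> where "\<gamma> = i1^n1 * \<alpha>2^k1"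
  have inv2P: "[\<alpha>2 * i2 = 1] (mod P)" using cong_dvd_modulus[OF inv2 Pq] .
  have "[\<delta> = \<alpha>2^k1 * i2^k1] (mod P)" unfolding \<delta>_def by (intro cong_mult cong_refl modp)
  also have "\<alpha>2^k1 * i2^k1 = (\<alpha>2 * i2)^k1" by (simp add: power_mult_distrib)
  also have "[\<dots> = 1^k1] (mod P)" by (intro cong_pow inv2P)
  finally have "P dvd \<delta> - 1" by (simp add: cong_iff_dvd_diff)
  then obtain d where dd: "\<delta> = 1 + P * d" by (metis add_diff_cancel_left' diff_add_cancel dvd_def)
  have "[\<delta> * \<gamma> = 1] (mod q)"
  proof -
    have "\<delta> * \<gamma> = (\<alpha>1 * i1)^n1 * (\<alpha>2 * i2)^k1" unfolding \<delta>_def \<gamma>_def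
      by (simp add: power_mult_distrib algebra_simps)
    also have "[\<dots> = 1^n1 * 1^k1] (mod q)" by (intro cong_mult cong_pow inv1 inv2)
    finally show ?thesis by simp
  qed
  have g: "[\<gamma> = 1 + P * (-d)] (mod q)"
  proof -
    have "[\<gamma> = \<gamma> * (\<delta> * (1 - P*d))] (mod q)"
    proof -
      have "\<gamma> * (\<delta> * (1 - P*d)) = \<gamma> - \<gamma> * d^2 * q" unfolding dd q_def
        by (simp add: algebra_simps power2_eq_square)
      thus ?thesis by (simp add: cong_iff_dvd_diff)
    qed
    also have "\<gamma> * (\<delta> * (1 - P*d)) = (\<delta> * \<gamma>) * (1 - P*d)" by simp
    also have "[\<dots> = 1 * (1 - P*d)] (mod q)" by (intro cong_mult cong_refl) fact
    finally show ?thesis by simp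
  qed
  have KAB: "[\<alpha>^k1 = \<alpha>1 * (1 - u2 * P * d)] (mod q) \<and> [\<alpha>^n1 = \<alpha>2 * (1 + u1 * P * d)] (mod q)"
  proof (cases "u2 \<le> 0")
    case True
    have "int n1 * u2 \<le> 0" using True by (simp add: mult_nonneg_nonpos)
    hence "int k1 * u1 \<ge> 1" using bez by linarith
    hence u1p: "u1 > 0" using k1pos by (metis linorder_not_less mult_nonneg_nonpos of_nat_0_le_iff zero_less_one_class.zero_le_one not_one_le_zero order_trans)
    define a' where "a' = nat u1"
    define b where "b = nat (-u2)"
    have "int (k1 * a') = int (1 + n1 * b)" unfolding a'_def b_def using bez True u1p
      by (simp add: algebra_simps)
    hence kab: "k1 * a' = 1 + n1 * b" by (simp only: of_nat_eq_iff)
    have al: "[\<alpha> = \<alpha>1^a' * i2^b] (mod q)"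
      using A(12) True u1p unfolding zpow_mod_def a'_def b_def i2_def q_def
      by (cases "u2 = 0") auto
    have "[\<alpha>^k1 = (\<alpha>1^a' * i2^b)^k1] (mod q)" by (intro cong_pow al)
    also have "(\<alpha>1^a' * i2^b)^k1 = \<alpha>1 * \<delta>^b"
      unfolding \<delta>_def using pw1[OF kab] by simp
    also have "[\<alpha>1 * \<delta>^b = \<alpha>1 * (1 + int b * P * d)] (mod q)"
      unfolding dd q_def by (intro cong_mult cong_refl one_pow_cong)
    also have "int b = - u2" unfolding b_def using True by simp
    finally have 1: "[\<alpha>^k1 = \<alpha>1 * (1 - u2 * P * d)] (mod q)" by simp
    have "[\<alpha>^n1 = (\<alpha>1^a' * i2^b)^n1] (mod q)" by (intro cong_pow al)
    also have "(\<alpha>1^a' * i2^b)^n1 = 1 * (\<alpha>1^a' * i2^b)^n1" by simp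
    also have "[\<dots> = (\<alpha>2 * i2) * (\<alpha>1^a' * i2^b)^n1] (mod q)"
      by (intro cong_mult cong_refl cong_sym[OF inv2])
    also have "(\<alpha>2 * i2) * (\<alpha>1^a' * i2^b)^n1 = \<alpha>2 * \<delta>^a'"
      unfolding \<delta>_def using pw2[OF kab, of \<alpha>2 i2 \<alpha>1] by simp
    also have "[\<alpha>2 * \<delta>^a' = \<alpha>2 * (1 + int a' * P * d)] (mod q)"
      unfolding dd q_def by (intro cong_mult cong_refl one_pow_cong)
    also have "int a' = u1" unfolding a'_def using u1p by simp
    finally have 2: "[\<alpha>^n1 = \<alpha>2 * (1 + u1 * P * d)] (mod q)" by simp
    show ?thesis using 1 2 by blast
  next
    case False
    have "int n1 * u2 \<ge> 1" using False n1pos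
      by (metis int_one_le_iff_zero_less mult_pos_pos not_le of_nat_0_less_iff less_le_trans zero_less_one less_eq_nat.simps(1) not_less_eq_eq One_nat_def)
    hence "int k1 * u1 \<le> 0" using bez by linarith
    hence u1p: "u1 \<le> 0" using k1pos by (metis linorder_not_less mult_pos_pos of_nat_0_less_iff not_le less_le_trans zero_less_one less_eq_nat.simps(1) not_less_eq_eq One_nat_def)
    define a' where "a' = nat (-u1)"
    define b where "b = nat u2"
    have "int (n1 * b) = int (1 + k1 * a')" unfolding a'_def b_def using bez False u1p
      by (simp add: algebra_simps)
    hence kab: "n1 * b = 1 + k1 * a'" by (simp only: of_nat_eq_iff)
    have al: "[\<alpha> = i1^a' * \<alpha>2^b] (mod q)"
      using A(12) False u1p unfolding zpow_mod_def a'_def b_def i1_def q_def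
      by (cases "u1 = 0") auto
    have "[\<alpha>^k1 = (i1^a' * \<alpha>2^b)^k1] (mod q)" by (intro cong_pow al)
    also have "(i1^a' * \<alpha>2^b)^k1 = 1 * (i1^a' * \<alpha>2^b)^k1" by simp
    also have "[\<dots> = (\<alpha>1 * i1) * (i1^a' * \<alpha>2^b)^k1] (mod q)"
      by (intro cong_mult cong_refl cong_sym[OF inv1])
    also have "(\<alpha>1 * i1) * (i1^a' * \<alpha>2^b)^k1 = \<alpha>1 * \<gamma>^b"
      unfolding \<gamma>_def using pw2[OF kab, of \<alpha>1 i1 \<alpha>2] by (simp add: mult.commute)
    also have "[\<alpha>1 * \<gamma>^b = \<alpha>1 * (1 + P * (-d))^b] (mod q)"
      by (intro cong_mult cong_refl cong_pow g)
    also have "[\<alpha>1 * (1 + P * (-d))^b = \<alpha>1 * (1 + int b * P * (-d))] (mod q)"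
      unfolding q_def by (intro cong_mult cong_refl one_pow_cong)
    also have "int b = u2" unfolding b_def using False by simp
    finally have 1: "[\<alpha>^k1 = \<alpha>1 * (1 - u2 * P * d)] (mod q)" by simp
    have "[\<alpha>^n1 = (i1^a' * \<alpha>2^b)^n1] (mod q)" by (intro cong_pow al)
    also have "(i1^a' * \<alpha>2^b)^n1 = \<alpha>2 * \<gamma>^a'"
      unfolding \<gamma>_def using pw1[OF kab, of \<alpha>2 i1] by (simp add: mult.commute)
    also have "[\<alpha>2 * \<gamma>^a' = \<alpha>2 * (1 + P * (-d))^a'] (mod q)"
      by (intro cong_mult cong_refl cong_pow g)
    also have "[\<alpha>2 * (1 + P * (-d))^a' = \<alpha>2 * (1 + int a' * P * (-d))] (mod q)"
      unfolding q_def by (intro cong_mult cong_refl one_pow_cong)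
    also have "int a' = - u1" unfolding a'_def using u1p by simp
    finally have 2: "[\<alpha>^n1 = \<alpha>2 * (1 + u1 * P * d)] (mod q)" by simp
    show ?thesis using 1 2 by blast
  qed

  have P0: "P \<noteq> 0" using pP by auto
  have qPP: "q = P * P" unfolding q_def by (simp add: power2_eq_square)
  have copN: "coprime N q" using cop nd(5) .
  define X where "X = \<alpha>1 + c"
  have Nn: "N + int n = int (k*m)" unfolding N_def by simp
  have NX: "[N*X = int (k*m)*c] (mod q)"
  proof -
    have "N*X = N*\<alpha>1 + N*c" unfolding X_def by (simp add: algebra_simps)
    also have "[\<dots> = int n * c + N*c] (mod q)" by (intro cong_add cong_refl c10)
    also have "int n * c + N*c = (N + int n)*c" by (simp add: algebra_simps)
    also have "\<dots> = int (k*m)*c" using Nn by simp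
    finally show ?thesis .
  qed
  have aX: "[a*\<alpha>2 = X^m] (mod q)"
  proof -
    have "N^m * (a*\<alpha>2) = a * N^m * \<alpha>2" by simp
    also have "[\<dots> = (int (k*m) * c)^m] (mod q)" by (rule c11)
    also have "[(int (k*m) * c)^m = (N*X)^m] (mod q)" by (intro cong_pow cong_sym[OF NX])
    also have "(N*X)^m = N^m * X^m" by (simp add: power_mult_distrib)
    finally have "[N^m * (a*\<alpha>2) = N^m * X^m] (mod q)" .
    moreover have "coprime (N^m) q" using copN by simp
    ultimately show ?thesis by (simp add: cong_mult_lcancel)
  qed
  define R where "R = (\<alpha> ^ k1 + c) ^ m - a * \<alpha> ^ n1"
  define W where "W = int m * u2 * \<alpha>1 + u1 * X"
  have "[R = (X + P*(-u2*d*\<alpha>1))^m - (a*\<alpha>2)*(1 + u1*P*d)] (mod q)"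
  proof -
    have "[\<alpha>^k1 + c = \<alpha>1 * (1 - u2 * P * d) + c] (mod q)" using KAB by (intro cong_add cong_refl) blast
    moreover have "\<alpha>1 * (1 - u2 * P * d) + c = X + P*(-u2*d*\<alpha>1)" unfolding X_def by (simp add: algebra_simps)
    ultimately have 1: "[\<alpha>^k1 + c = X + P*(-u2*d*\<alpha>1)] (mod q)" by simp
    have 2: "[a * \<alpha>^n1 = (a*\<alpha>2)*(1 + u1*P*d)] (mod q)"
      using KAB by (simp add: mult.assoc) (intro cong_mult cong_refl, blast)
    show ?thesis unfolding R_def by (intro cong_diff cong_pow 1 2)
  qed
  also have "[(X + P*(-u2*d*\<alpha>1))^m - (a*\<alpha>2)*(1 + u1*P*d) =
      (X^m + int m * X^(m-1) * P * (-u2*d*\<alpha>1)) - X^m*(1 + u1*P*d)] (mod q)"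
    unfolding q_def by (intro cong_diff cong_mult cong_refl binom_cong m1 aX[unfolded q_def])
  also have "(X^m + int m * X^(m-1) * P * (-u2*d*\<alpha>1)) - X^m*(1 + u1*P*d) = - (P*d*X^(m-1)) * W"
  proof -
    have "X^m = X * X^(m-1)" using m1 by (simp add: power_eq_if)
    thus ?thesis unfolding W_def by (simp add: algebra_simps)
  qed
  finally have RW: "[R = - (P*d*X^(m-1)) * W] (mod q)" .
  have NW: "[N*W = int m * c * int t] (mod q)"
  proof -
    have "N*W = int m * u2 * (N*\<alpha>1) + u1 * (N*X)" unfolding W_def by (simp add: algebra_simps)
    also have "[\<dots> = int m * u2 * (int n * c) + u1 * (int (k*m)*c)] (mod q)"
      by (intro cong_add cong_mult cong_refl c10 NX)
    also have "int m * u2 * (int n * c) + u1 * (int (k*m)*c) = int m * c * (int k * u1 + int n * u2)"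
      by (simp add: algebra_simps)
    also have "\<dots> = int m * c * int t" using assms(6) by simp
    finally show ?thesis .
  qed
  have "[N*R = - (P*d*X^(m-1)) * (N*W)] (mod q)"
    using cong_mult[OF cong_refl[of N] RW] by (simp add: algebra_simps)
  also have "[- (P*d*X^(m-1)) * (N*W) = - (P*d*X^(m-1)) * (int m * c * int t)] (mod q)"
    by (intro cong_mult cong_refl NW)
  finally have NR: "[N*R = - (P*d*X^(m-1)) * (int m * c * int t)] (mod q)" .
  have ndX: "\<not> P dvd X"
  proof
    assume "P dvd X"
    hence "P dvd N*X" by simp
    hence "P dvd int (k*m)*c" using cong_dvd_modulus[OF NX Pq] by (simp add: cong_dvd_iff)
    thus False using ndkmc by simp
  qed
  have "[R = 0] (mod q) \<longleftrightarrow> [N*R = N*0] (mod q)" using cong_mult_lcancel[OF copN, of R 0] by simp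
  also have "\<dots> \<longleftrightarrow> q dvd (P * (d*X^(m-1)*int m * c * int t))"
    using NR by (auto simp: cong_0_iff cong_dvd_iff algebra_simps)
  also have "\<dots> \<longleftrightarrow> P dvd d*X^(m-1)*int m * c * int t" unfolding qPP using P0 by simp
  also have "\<dots> \<longleftrightarrow> P dvd d"
    using pP ndX nd ndt by (cases "m - 1 = 0") (auto simp: prime_dvd_mult_iff prime_dvd_power_iff)
  finally have L: "[R = 0] (mod q) \<longleftrightarrow> P dvd d" .
  have "[\<alpha>1^n1 = \<alpha>2^k1] (mod q) \<longleftrightarrow> [\<delta> = 1] (mod q)"
  proof
    assume h: "[\<alpha>1^n1 = \<alpha>2^k1] (mod q)"
    have "[\<delta> = \<alpha>2^k1 * i2^k1] (mod q)" unfolding \<delta>_def by (intro cong_mult cong_refl h)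
    also have "\<alpha>2^k1 * i2^k1 = (\<alpha>2 * i2)^k1" by (simp add: power_mult_distrib)
    also have "[\<dots> = 1^k1] (mod q)" by (intro cong_pow inv2)
    finally show "[\<delta> = 1] (mod q)" by simp
  next
    assume h: "[\<delta> = 1] (mod q)"
    have "\<alpha>1^n1 = \<alpha>1^n1 * 1^k1" by simp
    also have "[\<dots> = \<alpha>1^n1 * (\<alpha>2 * i2)^k1] (mod q)" by (intro cong_mult cong_refl cong_pow cong_sym[OF inv2])
    also have "\<alpha>1^n1 * (\<alpha>2 * i2)^k1 = \<delta> * \<alpha>2^k1" unfolding \<delta>_def by (simp add: power_mult_distrib algebra_simps)
    also have "[\<dots> = 1 * \<alpha>2^k1] (mod q)" by (intro cong_mult cong_refl h)
    finally show "[\<alpha>1^n1 = \<alpha>2^k1] (mod q)" by simp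
  qed
  also have "\<dots> \<longleftrightarrow> P dvd d" unfolding dd cong_iff_dvd_diff qPP using P0 by simp
  finally have Rt: "[\<alpha>1^n1 = \<alpha>2^k1] (mod q) \<longleftrightarrow> P dvd d" .
  show ?thesis using L Rt unfolding R_def q_def P_def by simp
qed

end
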